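(* $conv\leq_{K}\mathcal{S}pl$.
   Context: $conv$ is the ideal on $\mathbb{Q}\cap[0,1]$ generated by sequences in $\mathbb{Q}\cap[0,1]$ converging in $[0,1]$. For an infinite $A\subseteq\omega$, let $S(A)$ be the set of all $\sigma\in2^{<\omega}$ such that $\sigma$ is constant on $A\cap\mathrm{dom}(\sigma)$. The splitting ideal $\mathcal{S}pl$ is the ideal on $2^{<\omega}$ generated by the sets $S(A)$, $A\in[\omega]^{\omega}$. For ideals $\mathcal{J}_0,\mathcal{J}_1$ on countable sets $X_0,X_1$, $\mathcal{J}_{0}\leq_{K}\mathcal{J}_{1}$ means there is a function $\pi:X_1\rightarrow X_0$ with $\pi^{-1}[A]\in\mathcal{J}_{1}$ for every $A\in\mathcal{J}_{0}$. *)

theory Defs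
  imports Complex_Main
begin

definition generated_ideal :: "'a set \<Rightarrow> 'a set set \<Rightarrow> 'a set set" where
  "generated_ideal X G = {B. B \<subseteq> X \<and> (\<exists>F. finite F \<and> F \<subseteq> G \<and> B \<subseteq> \<Union>F)}"

definition katetov_le :: "'a set \<Rightarrow> 'a set set \<Rightarrow> 'b set \<Rightarrow> 'b set set \<Rightarrow> bool" where
  "katetov_le X0 J0 X1 J1 \<longleftrightarrow>
     (\<exists>\<pi> :: 'b \<Rightarrow> 'a. (\<forall>x\<in>X1. \<pi> x \<in> X0) \<and> (\<forall>A\<in>J0. {x\<in>X1. \<pi> x \<in> A} \<in> J1))"

definition Q01 :: "real set" where
  "Q01 = {x. x \<in> \<rat> \<and> 0 \<le> x \<and> x \<le> 1}"

definition conv :: "real set set" where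
  "conv = generated_ideal Q01
     {range f | f. (\<forall>n. f n \<in> Q01) \<and> (\<exists>L. 0 \<le> L \<and> L \<le> 1 \<and> f \<longlonglongrightarrow> L)}"

text \<open>2^{<omega} as bool lists; dom sigma = {..<length sigma}.\<close>
definition S_set :: "nat set \<Rightarrow> bool list set" where
  "S_set A = {\<sigma>. \<forall>i\<in>A. \<forall>j\<in>A. i < length \<sigma> \<longrightarrow> j < length \<sigma> \<longrightarrow> \<sigma> ! i = \<sigma> ! j}"

definition Spl :: "bool list set set" where
  "Spl = generated_ideal UNIV {S_set A | A. infinite A}"

end

theory Submission
  imports Defs "HOL-Library.Infinite_Set"
begin

fun pc :: "bool list \<Rightarrow> real" where
  "pc [] = 1/2"
| "pc (b # s) = (if b then 2/3 else 0) + pc s / 3"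

lemma pc_bounds: "0 < pc s \<and> pc s < 1"
  by (induction s) auto

lemma pc_rat: "pc s \<in> \<rat>"
  by (induction s) auto

lemma pc_Q01: "pc s \<in> Q01"
  using pc_rat[of s] pc_bounds[of s] unfolding Q01_def by auto

lemma pc_sep: "take k s \<noteq> take k t \<Longrightarrow> 1 / (6 * 3 ^ k) < \<bar>pc s - pc t\<bar>"
proof (induction k arbitrary: s t)
  case 0
  then show ?case by simp
next
  case (Suc k)
  have k: "1 / (6 * 3 ^ Suc k) \<le> (1/18::real)"
  proof -
    have "(1::real) \<le> 3 ^ k" by simp
    then have "(18::real) \<le> 6 * 3 ^ Suc k" by simp
    then show ?thesis by (simp add: divide_simps)
  qed
  show ?case
  proof (cases s)
    case Nil
    then obtain b t' where t: "t = b # t'" using Suc.prems by (cases t) auto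
    have "1/6 < \<bar>pc s - pc t\<bar>" using pc_bounds[of t'] Nil t by auto
    then show ?thesis using k by linarith
  next
    case (Cons a s')
    show ?thesis
    proof (cases t)
      case Nil
      have "1/6 < \<bar>pc s - pc t\<bar>" using pc_bounds[of s'] Nil Cons by auto
      then show ?thesis using k by linarith
    next
      case (Cons b t')
      show ?thesis
      proof (cases "a = b")
        case True
        then have "take k s' \<noteq> take k t'" using Suc.prems Cons \<open>s = a # s'\<close> by auto
        from Suc.IH[OF this] have "1 / (6 * 3 ^ k) < \<bar>pc s' - pc t'\<bar>" .
        moreover have "pc s - pc t = (pc s' - pc t') / 3"
          using True Cons \<open>s = a # s'\<close> by (auto simp: field_simps)
        then have "\<bar>pc s - pc t\<bar> = \<bar>pc s' - pc t'\<bar> / 3" by (metis abs_divide abs_numeral)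
        ultimately have "(1 / (6 * 3 ^ k)) / 3 < \<bar>pc s - pc t\<bar>"
          by (metis divide_strict_right_mono zero_less_numeral)
        moreover have "1/(6*3^Suc k) = (1/(6*3^k))/(3::real)" by simp
        ultimately show ?thesis by simp
      next
        case False
        have "1/3 < \<bar>pc s - pc t\<bar>" using pc_bounds[of s'] pc_bounds[of t'] False Cons \<open>s = a # s'\<close>
          by (cases a; cases b) auto
        then show ?thesis using k by linarith
      qed
    qed
  qed
qed

lemma pc_inj: "inj pc"
proof (rule injI)
  fix s t assume eq: "pc s = pc t"
  show "s = t"
  proof (rule ccontr)
    assume "s \<noteq> t"
    then have "take (max (length s) (length t)) s \<noteq> take (max (length s) (length t)) t" by simp
    from pc_sep[OF this] eq show False by simp
  qed
qed


primrec seqT :: "nat set \<Rightarrow> (nat \<Rightarrow> nat) \<Rightarrow> nat \<Rightarrow> nat" where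
  "seqT Z B 0 = (SOME z. z \<in> Z)"
| "seqT Z B (Suc j) = (SOME z. z \<in> Z \<and> seqT Z B j < z \<and> B (seqT Z B j) \<le> z)"

lemma seqT_props:
  assumes "infinite Z"
  shows "seqT Z B j \<in> Z \<and> seqT Z B j < seqT Z B (Suc j) \<and> B (seqT Z B j) \<le> seqT Z B (Suc j)"
proof -
  have ex: "\<exists>z. z \<in> Z \<and> t < z \<and> B t \<le> z" for t
  proof -
    obtain n where "n > max t (B t)" "n \<in> Z" using assms unfolding infinite_nat_iff_unbounded by blast
    then show ?thesis by auto
  qed
  have mem: "seqT Z B j \<in> Z" for j
  proof (cases j)
    case 0
    have "\<exists>z. z \<in> Z" using ex by blast
    then show ?thesis using 0 by (simp add: some_in_eq) blast
  next
    case (Suc i)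
    show ?thesis using someI_ex[OF ex[of "seqT Z B i"]] Suc by simp
  qed
  show ?thesis using mem[of j] someI_ex[OF ex[of "seqT Z B j"]] by simp
qed

lemma infinite_even: "infinite {j::nat. even j}"
  unfolding infinite_nat_iff_unbounded
proof
  fix m :: nat show "\<exists>n>m. n \<in> {j. even j}" by (rule exI[of _ "2*m+2"]) auto
qed

lemma infinite_odd: "infinite {j::nat. odd j}"
  unfolding infinite_nat_iff_unbounded
proof
  fix m :: nat show "\<exists>n>m. n \<in> {j. odd j}" by (rule exI[of _ "2*m+1"]) auto
qed

lemma seq_preimage:
  assumes lim: "f \<longlonglongrightarrow> L"
  shows "\<exists>A0 A1. infinite A0 \<and> infinite A1 \<and> {s. pc s \<in> range f} \<subseteq> S_set A0 \<union> S_set A1"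
proof -
  define Y where "Y = {s. pc s \<in> range f}"
  have cau: "Cauchy f" using lim by (rule LIMSEQ_imp_Cauchy)
  have fin_len: "finite {s::bool list. length s < k}" for k
  proof -
    have "finite {xs::bool list. set xs \<subseteq> UNIV \<and> length xs \<le> k}"
      by (rule finite_lists_length_le) simp
    then show ?thesis by (rule rev_finite_subset) auto
  qed
  have step: "\<exists>F. finite F \<and> F \<subseteq> Y \<and> (\<forall>s\<in>Y-F. k \<le> length s) \<and> (\<forall>s\<in>Y-F. \<forall>t\<in>Y-F. take k s = take k t)" for k
  proof -
    have "(0::real) < 1 / (6 * 3 ^ k)" by simp
    from CauchyD[OF cau this] obtain M where M: "\<forall>m\<ge>M. \<forall>n\<ge>M. norm (f m - f n) < 1 / (6 * 3 ^ k)" by blast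
    define F where "F = {s\<in>Y. pc s \<in> f ` {..<M}} \<union> {s\<in>Y. length s < k}"
    have "finite (pc -` (f ` {..<M}))" by (rule finite_vimageI) (auto simp: pc_inj)
    then have "finite {s\<in>Y. pc s \<in> f ` {..<M}}" by (rule rev_finite_subset) auto
    moreover have "finite {s\<in>Y. length s < k}" using fin_len[of k] by (rule rev_finite_subset) auto
    ultimately have "finite F" unfolding F_def by simp
    moreover have "F \<subseteq> Y" unfolding F_def by auto
    moreover have "\<forall>s\<in>Y-F. k \<le> length s" unfolding F_def by auto
    moreover have "\<forall>s\<in>Y-F. \<forall>t\<in>Y-F. take k s = take k t"
    proof (intro ballI)
      fix s t assume s: "s \<in> Y - F" and t: "t \<in> Y - F"
      obtain m where m: "pc s = f m" using s unfolding Y_def by auto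
      obtain n where n: "pc t = f n" using t unfolding Y_def by auto
      have "m \<ge> M" using s m unfolding F_def by (auto simp: not_le)
      moreover have "n \<ge> M" using t n unfolding F_def by (auto simp: not_le)
      ultimately have "\<bar>pc s - pc t\<bar> < 1 / (6 * 3 ^ k)" using M m n by auto
      then show "take k s = take k t" using pc_sep by force
    qed
    ultimately show ?thesis by blast
  qed
  then obtain F where F: "\<And>k. finite (F k) \<and> F k \<subseteq> Y \<and> (\<forall>s\<in>Y-F k. k \<le> length s) \<and> (\<forall>s\<in>Y-F k. \<forall>t\<in>Y-F k. take k s = take k t)"
    by metis
  show ?thesis
  proof (cases "finite Y")
    case True
    then obtain N where N: "\<forall>l\<in>length ` Y. l \<le> N" using finite_nat_set_iff_bounded_le by blast
    have inf: "infinite {Suc N..}" by (rule infinite_Ici)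
    have "Y \<subseteq> S_set {Suc N..}" using N unfolding S_set_def by fastforce
    then show ?thesis using inf unfolding Y_def by blast
  next
    case False
    define w where "w k = (SOME s. s \<in> Y - F k)" for k
    have w: "w k \<in> Y - F k" for k
    proof -
      have "infinite (Y - F k)" using False F[of k] by (simp add: Diff_infinite_finite)
      then have "\<exists>s. s \<in> Y - F k" by (metis ex_in_conv finite.emptyI)
      then show ?thesis unfolding w_def by (rule someI_ex)
    qed
    define x where "x i = w (Suc i) ! i" for i
    have X: "s ! i = x i" if "s \<in> Y - F (Suc i)" for s i
    proof -
      have eq: "take (Suc i) s = take (Suc i) (w (Suc i))" using F[of "Suc i"] w[of "Suc i"] that by blast
      have "Suc i \<le> length s" "Suc i \<le> length (w (Suc i))" using F[of "Suc i"] w[of "Suc i"] that by blast+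
      then show ?thesis unfolding x_def by (metis eq lessI nth_take)
    qed
    obtain c where Zinf: "infinite {i. x i = c}"
    proof (cases "infinite {i. x i = True}")
      case True then show ?thesis using that by blast
    next
      case False
      have "UNIV = {i. x i = True} \<union> {i. x i = False}" by auto
      then have "infinite {i. x i = False}" using False by (metis finite_Un infinite_UNIV_nat)
      then show ?thesis using that by blast
    qed
    define Z where "Z = {i. x i = c}"
    define B where "B t = Suc (Max (length ` F (Suc t)))" for t
    have B: "length s < B t" if "s \<in> F (Suc t)" for s t
    proof -
      have "length s \<le> Max (length ` F (Suc t))" using F[of "Suc t"] that by (intro Max_ge) auto
      then show ?thesis unfolding B_def by simp
    qed
    define T where "T = seqT Z B"
    have TP: "T j \<in> Z \<and> T j < T (Suc j) \<and> B (T j) \<le> T (Suc j)" for j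
      unfolding T_def using seqT_props Zinf Z_def by blast
    have smT: "strict_mono T" using TP by (simp add: strict_mono_Suc_iff)
    have injT: "inj T" using smT by (rule strict_mono_imp_inj_on)
    define A0 where "A0 = T ` {j. even j}"
    define A1 where "A1 = T ` {j. odd j}"
    have "infinite A0" unfolding A0_def using infinite_even injT
      by (metis finite_imageD inj_on_subset subset_UNIV)
    moreover have "infinite A1" unfolding A1_def using infinite_odd injT
      by (metis finite_imageD inj_on_subset subset_UNIV)
    moreover have "Y \<subseteq> S_set A0 \<union> S_set A1"
    proof
      fix s assume sY: "s \<in> Y"
      show "s \<in> S_set A0 \<union> S_set A1"
      proof (cases "\<exists>j. T j < length s \<and> s ! T j \<noteq> c")
        case False
        then have "\<forall>j. T j < length s \<longrightarrow> s ! T j = c" by blast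
        then have "s \<in> S_set A0" unfolding S_set_def A0_def by auto
        then show ?thesis by blast
      next
        case True
        define j0 where "j0 = (LEAST j. T j < length s \<and> s ! T j \<noteq> c)"
        have j0: "T j0 < length s \<and> s ! T j0 \<noteq> c" unfolding j0_def using True by (rule LeastI_ex)
        have "s \<in> F (Suc (T j0))"
        proof (rule ccontr)
          assume "s \<notin> F (Suc (T j0))"
          then have "s ! T j0 = x (T j0)" using X sY by blast
          moreover have "x (T j0) = c" using TP[of j0] unfolding Z_def by simp
          ultimately show False using j0 by simp
        qed
        then have lenlt: "length s < T (Suc j0)" using B TP[of j0] by fastforce
        have good: "s ! T j = c" if "j \<noteq> j0" "T j < length s" for j
        proof (cases "j < j0")
          case True
          then show ?thesis using not_less_Least[of j "\<lambda>j. T j < length s \<and> s ! T j \<noteq> c"] that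
            unfolding j0_def by blast
        next
          case False
          then have "Suc j0 \<le> j" using that by simp
          then have "T (Suc j0) \<le> T j" using smT by (simp add: strict_mono_less_eq)
          then show ?thesis using lenlt that by simp
        qed
        show ?thesis
        proof (cases "even j0")
          case True
          have "s \<in> S_set A1" unfolding S_set_def A1_def
          proof (clarsimp)
            fix i i' assume "odd i" "odd i'" "T i < length s" "T i' < length s"
            then show "s ! T i = s ! T i'" using good[of i] good[of i'] True by metis
          qed
          then show ?thesis by blast
        next
          case False
          have "s \<in> S_set A0" unfolding S_set_def A0_def
          proof (clarsimp)
            fix i i' assume "even i" "even i'" "T i < length s" "T i' < length s"
            then show "s ! T i = s ! T i'" using good[of i] good[of i'] False by metis
          qed
          then show ?thesis by blast
        qed
      qed
    qed
    ultimately show ?thesis unfolding Y_def by blast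
  qed
qed


theorem mainTheorem7:
  shows "katetov_le Q01 conv (UNIV :: bool list set) Spl"
  unfolding katetov_le_def
proof (intro exI[of _ pc] conjI ballI)
  fix x :: "bool list" show "pc x \<in> Q01" by (rule pc_Q01)
next
  define GG where "GG = {range f | f. (\<forall>n. f n \<in> Q01) \<and> (\<exists>L. 0 \<le> L \<and> L \<le> 1 \<and> f \<longlonglongrightarrow> L)}"
  define GS where "GS = {S_set A | A::nat set. infinite A}"
  fix A assume "A \<in> conv"
  then have "\<exists>G. finite G \<and> G \<subseteq> GG \<and> A \<subseteq> \<Union>G"
    unfolding conv_def generated_ideal_def GG_def by simp
  then obtain G where G: "finite G" "G \<subseteq> GG" "A \<subseteq> \<Union>G" by (elim exE conjE)
  have "\<forall>R\<in>G. \<exists>H. finite H \<and> H \<subseteq> GS \<and> pc -` R \<subseteq> \<Union>H"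
  proof
    fix R assume "R \<in> G"
    then have "R \<in> GG" using G(2) by (rule subsetD[rotated])
    then obtain f L where R: "R = range f" "f \<longlonglongrightarrow> L" unfolding GG_def by auto
    from seq_preimage[OF R(2)] obtain A0 A1 where AA: "infinite A0" "infinite A1"
      "{s. pc s \<in> range f} \<subseteq> S_set A0 \<union> S_set A1" by (elim exE conjE)
    have "{S_set A0, S_set A1} \<subseteq> GS" unfolding GS_def using AA(1,2) by blast
    moreover have "pc -` R \<subseteq> \<Union>{S_set A0, S_set A1}" using AA(3) R(1) by auto
    ultimately show "\<exists>H. finite H \<and> H \<subseteq> GS \<and> pc -` R \<subseteq> \<Union>H"
      by (intro exI[of _ "{S_set A0, S_set A1}"]) simp
  qed
  from bchoice[OF this] obtain h where h: "\<forall>R\<in>G. finite (h R) \<and> h R \<subseteq> GS \<and> pc -` R \<subseteq> \<Union>(h R)"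
    by (elim exE)
  have "finite (\<Union>(h ` G))" using G(1) h by auto
  moreover have "\<Union>(h ` G) \<subseteq> GS" using h by (simp add: UN_subset_iff)
  moreover have "{x \<in> UNIV. pc x \<in> A} \<subseteq> \<Union>(\<Union>(h ` G))"
  proof
    fix x assume "x \<in> {x \<in> UNIV. pc x \<in> A}"
    then have "pc x \<in> \<Union>G" using G(3) by auto
    then obtain R where "R \<in> G" "pc x \<in> R" by (elim UnionE)
    then have "x \<in> \<Union>(h R)" using h by blast
    then show "x \<in> \<Union>(\<Union>(h ` G))" using \<open>R \<in> G\<close> by blast
  qed
  ultimately show "{x \<in> UNIV. pc x \<in> A} \<in> Spl"
    unfolding Spl_def generated_ideal_def GS_def by blast
qed

end
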